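(* Let $\mathcal{A}$ be an integral domain with field of fractions $\mathcal{F}$, let $\mathcal{Z}\subsetneq\mathcal{A}$ be a prime ideal, and let $\mathcal{P}=\{n/d\mid n\in\mathcal{A},\ d\in\mathcal{A}\setminus\mathcal{Z}\}$. Let $a,b,a',b'\in\mathcal{A}$ with $a'\neq0$, suppose $ab=a'b'$, and suppose $p=a/a'$ belongs to $\mathcal{P}$. If the pair $(a,b)$ is coprime over $\mathcal{A}$ (i.e. $xa+yb=1$ for some $x,y\in\mathcal{A}$), then the single-input single-output plant $p$ is stabilizable (whether or not $p$ has a coprime factorization over $\mathcal{A}$).
   Context: $\mathcal{A}$ is the ring of stable causal transfer functions, $\mathcal{F}$ its field of fractions, and elements of $\mathcal{P}$ are the causal transfer functions. For a single-input single-output plant $p\in\mathcal{F}$ and controller $c\in\mathcal{F}$ with $1+pc\neq0$, the closed-loop matrix is $H(p,c)=\begin{pmatrix}(1+pc)^{-1} & -p(1+pc)^{-1}\\ c(1+pc)^{-1} & (1+pc)^{-1}\end{pmatrix}$; $p$ is stabilizable if there exists $c\in\mathcal{F}$ with $1+pc\neq0$ such that all entries of $H(p,c)$ lie in $\mathcal{A}$. A coprime factorization of $p$ is $p=n/d$ with $n,d\in\mathcal{A}$, $d\neq0$, and $xn+yd=1$ for some $x,y\in\mathcal{A}$. *)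

theory Defs
  imports "HOL-Computational_Algebra.Fraction_Field"
begin

text \<open>The ring A is a type of class idom; its field of fractions F is 'a fract.\<close>

definition emb :: "'a::idom \<Rightarrow> 'a fract" where
  "emb a = Fract a 1"

definition ringA :: "'a::idom fract set" where
  "ringA = range emb"

definition prime_ideal :: "'a::idom set \<Rightarrow> bool" where
  "prime_ideal Z \<longleftrightarrow>
     0 \<in> Z \<and> (\<forall>x\<in>Z. \<forall>y\<in>Z. x + y \<in> Z) \<and> (\<forall>r. \<forall>x\<in>Z. r * x \<in> Z) \<and>
     Z \<noteq> UNIV \<and> (\<forall>x y. x * y \<in> Z \<longrightarrow> x \<in> Z \<or> y \<in> Z)"

definition ringP :: "'a::idom set \<Rightarrow> 'a fract set" where
  "ringP Z = {emb n / emb d | n d. d \<notin> Z}"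

definition H :: "'a::idom fract \<Rightarrow> 'a fract \<Rightarrow> nat \<Rightarrow> nat \<Rightarrow> 'a fract" where
  "H p c i j =
     (if i = 0 \<and> j = 0 then inverse (1 + p * c)
      else if i = 0 then - p * inverse (1 + p * c)
      else if j = 0 then c * inverse (1 + p * c)
      else inverse (1 + p * c))"

definition stabilizable :: "'a::idom fract \<Rightarrow> bool" where
  "stabilizable p \<longleftrightarrow>
     (\<exists>c. 1 + p * c \<noteq> 0 \<and> (\<forall>i<2. \<forall>j<2. H p c i j \<in> ringA))"

end

theory Submission
  imports Defs
begin

lemma emb_mult: "emb (a*b) = emb a * emb (b::'a::idom)"
  by (simp add: emb_def mult_fract)
lemma emb_add: "emb (a+b) = emb a + emb (b::'a::idom)"
  by (simp add: emb_def add_fract)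
lemma emb_diff: "emb (a-b) = emb a - emb (b::'a::idom)"
  by (simp add: emb_def diff_fract)
lemma emb_1: "emb 1 = (1::'a::idom fract)"
  by (simp add: emb_def One_fract_def)
lemma emb_0: "emb 0 = (0::'a::idom fract)"
  by (simp add: emb_def Zero_fract_def)
lemma emb_eq0: "emb (a::'a::idom) = 0 \<longleftrightarrow> a = 0"
  by (simp add: emb_def Zero_fract_def eq_fract)
lemma inA: "emb x \<in> ringA" by (simp add: ringA_def)

lemma stab_crit:
  fixes p :: "'a::idom fract"
  assumes "S \<noteq> 0" "emb S + p * emb T = 1" "p * emb S = emb U"
  shows "stabilizable p"
proof -
  have S0: "emb S \<noteq> 0" using assms(1) emb_eq0 by auto
  define c where "c = emb T / emb S"
  have e: "1 + p * c = inverse (emb S)"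
    using S0 assms(2) unfolding c_def by (simp add: field_simps)
  have inv: "inverse (1 + p * c) = emb S" using e by simp
  have n: "1 + p * c \<noteq> 0" using e S0 by simp
  have cS: "c * emb S = emb T" using S0 unfolding c_def by simp
  have mU: "- p * emb S = emb (- U)"
    using assms(3) by (simp add: emb_def)
  show ?thesis unfolding stabilizable_def
    apply (rule exI[of _ c])
    using n inv cS mU by (auto simp: H_def inA less_2_cases_iff)
qed

theorem proposition2:
  fixes Z :: "'a::idom set" and a b a' b' :: 'a
  assumes "prime_ideal Z"
    and "a' \<noteq> 0"
    and "a * b = a' * b'"
    and "emb a / emb a' \<in> ringP Z"
    and "\<exists>x y. x * a + y * b = 1"
  shows "stabilizable (emb a / emb a')"
proof -
  obtain x y where xy: "x * a + y * b = 1" using assms(5) by blast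
  have a0: "emb a' \<noteq> 0" using assms(2) emb_eq0 by auto
  have xy': "emb x * emb a + emb y * emb b = 1"
    using arg_cong[OF xy, of emb] by (simp add: emb_mult emb_add emb_1)
  have ab: "emb a * emb b = emb a' * emb b'"
    using arg_cong[OF assms(3), of emb] by (simp add: emb_mult)
  show ?thesis
  proof (cases "y * b = 0")
    case False
    show ?thesis
    proof (rule stab_crit[where S="y*b" and T="x*a'" and U="y*b'"])
      show "emb (y * b) + emb a / emb a' * emb (x * a') = 1"
        using a0 xy' by (simp add: emb_mult field_simps)
      show "emb a / emb a' * emb (y * b) = emb (y * b')"
        using a0 ab by (simp add: emb_mult field_simps)
    qed (use False in auto)
  next
    case True
    then have xa: "emb x * emb a = 1" using xy'
      by (metis add.right_neutral emb_0 emb_mult)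
    show ?thesis
    proof (rule stab_crit[where S="a'" and T="x*a'*(1-a')" and U="a"])
      have "emb a / emb a' * emb (x * a' * (1 - a')) = (emb x * emb a) * (1 - emb a')"
        using a0 by (simp add: emb_mult emb_diff emb_1)
      also have "\<dots> = 1 - emb a'" using xa by simp
      finally show "emb a' + emb a / emb a' * emb (x * a' * (1 - a')) = 1" by simp
      show "emb a / emb a' * emb a' = emb a"
        using a0 by simp
    qed (use assms(2) in auto)
  qed
qed

end
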